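(* Let $\mathcal{R}=(\mathcal{W},\mathcal{R}_1,\mathcal{R}_2)$ with $\mathcal{W}=\{1,\dots,m\}$, let $\mathcal{S}$, $L$, $K_1,\dots,K_4$ be constructed from $\mathcal{R}$ as below, and let $\mathcal{T}$ be a solution to the $\mathcal{S}$-cyclic triomino problem. Fix $s\in\mathbb{Z}^2$. If $q(s,i)$ holds for some $1\le i\le 4$, then $q(s,i)$ holds for every $1\le i\le 4$.
   Context: A domino set is $\mathcal{R}=(\mathcal{W},\mathcal{R}_1,\mathcal{R}_2)$ with $\mathcal{W}$ non-empty finite and $\mathcal{R}_1,\mathcal{R}_2\subset\mathcal{W}^2$; here $\mathcal{W}=\{1,\dots,m\}$. Let $u_1=(1,0),u_2=(0,1),u_3=(-1,0),u_4=(0,-1)$, indices mod 4. Fix $n\ge 2m+1$ and regard integers as elements of $\mathbb{Z}_n$. Let $L=\{(w,0,0): w\in\mathcal{W}\}$, $K_1=L\cup\{(0,b,a):(a,b)\in\mathcal{R}_1\}$, $K_2=L\cup\{(0,a,b):(a,b)\in\mathcal{R}_2\}$, $K_3=L\cup\{(0,a,b):(a,b)\in\mathcal{R}_1\}$, $K_4=L\cup\{(0,b,a):(a,b)\in\mathcal{R}_2\}$, with $K_{i+4}=K_i$. Let $\mathcal{V}=\mathbb{Z}_n$, $\mathcal{S}_i=\{(a+k,b+k,c+k):(a,b,c)\in K_i, k\in\mathcal{V}\}$, $\mathcal{S}_{i+4}=\mathcal{S}_i$, and $\mathcal{S}=(\mathcal{V},\mathcal{S}_1,\dots,\mathcal{S}_4)$.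 A solution to the $\mathcal{S}$-cyclic triomino problem is a function $\mathcal{T}:\mathbb{Z}^2\to\mathcal{V}$ with $(\mathcal{T}(s),\mathcal{T}(s+u_i),\mathcal{T}(s+u_{i+1}))\in\mathcal{S}_i$ for all $s$ and $1\le i\le 4$. For $s\in\mathbb{Z}^2$, $i\in\mathbb{Z}$, $p(s,i)$ is the statement $(\mathcal{T}(s),\mathcal{T}(s+u_i),\mathcal{T}(s+u_{i+1}))\in L$ and $q(s,i)$ is the statement $(\mathcal{T}(s),\mathcal{T}(s+u_i),\mathcal{T}(s+u_{i+1}))\in K_i\setminus L$. *)

theory Defs
  imports Main
begin

text \<open>Domino set: W = {1..m}, relations R1 R2 over W. Elements of Z_n are represented
  by integers in {0..<n}; an integer x is regarded as the element x mod n.\<close>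

definition domino_set :: "nat \<Rightarrow> (nat \<times> nat) set \<Rightarrow> (nat \<times> nat) set \<Rightarrow> bool" where
  "domino_set m R1 R2 \<longleftrightarrow> m \<ge> 1 \<and> R1 \<subseteq> {1..m} \<times> {1..m} \<and> R2 \<subseteq> {1..m} \<times> {1..m}"

definition u :: "int \<Rightarrow> int \<times> int" where
  "u i = (if i mod 4 = 1 then (1, 0) else if i mod 4 = 2 then (0, 1)
          else if i mod 4 = 3 then (-1, 0) else (0, -1))"

definition addv :: "int \<times> int \<Rightarrow> int \<times> int \<Rightarrow> int \<times> int" where
  "addv s v = (fst s + fst v, snd s + snd v)"

definition Lset :: "nat \<Rightarrow> nat \<Rightarrow> (int \<times> int \<times> int) set" where
  "Lset n m = {(int w mod int n, 0, 0) | w. w \<in> {1..m}}"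

definition Kset :: "nat \<Rightarrow> nat \<Rightarrow> (nat \<times> nat) set \<Rightarrow> (nat \<times> nat) set \<Rightarrow> int \<Rightarrow> (int \<times> int \<times> int) set" where
  "Kset n m R1 R2 i = Lset n m \<union>
     (if i mod 4 = 1 then {(0, int b mod int n, int a mod int n) | a b. (a, b) \<in> R1}
      else if i mod 4 = 2 then {(0, int a mod int n, int b mod int n) | a b. (a, b) \<in> R2}
      else if i mod 4 = 3 then {(0, int a mod int n, int b mod int n) | a b. (a, b) \<in> R1}
      else {(0, int b mod int n, int a mod int n) | a b. (a, b) \<in> R2})"

definition Sset :: "nat \<Rightarrow> nat \<Rightarrow> (nat \<times> nat) set \<Rightarrow> (nat \<times> nat) set \<Rightarrow> int \<Rightarrow> (int \<times> int \<times> int) set" where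
  "Sset n m R1 R2 i = {((a + k) mod int n, (b + k) mod int n, (c + k) mod int n) | a b c k.
      (a, b, c) \<in> Kset n m R1 R2 i \<and> k \<in> {0..<int n}}"

definition triple :: "(int \<times> int \<Rightarrow> int) \<Rightarrow> int \<times> int \<Rightarrow> int \<Rightarrow> int \<times> int \<times> int" where
  "triple T s i = (T s, T (addv s (u i)), T (addv s (u (i + 1))))"

definition cyclic_triomino_solution :: "nat \<Rightarrow> nat \<Rightarrow> (nat \<times> nat) set \<Rightarrow> (nat \<times> nat) set \<Rightarrow> (int \<times> int \<Rightarrow> int) \<Rightarrow> bool" where
  "cyclic_triomino_solution n m R1 R2 T \<longleftrightarrow>
     (\<forall>s. \<forall>i \<in> {1..4}. triple T s i \<in> Sset n m R1 R2 i)"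

definition p_pred :: "nat \<Rightarrow> nat \<Rightarrow> (int \<times> int \<Rightarrow> int) \<Rightarrow> int \<times> int \<Rightarrow> int \<Rightarrow> bool" where
  "p_pred n m T s i \<longleftrightarrow> triple T s i \<in> Lset n m"

definition q_pred :: "nat \<Rightarrow> nat \<Rightarrow> (nat \<times> nat) set \<Rightarrow> (nat \<times> nat) set \<Rightarrow> (int \<times> int \<Rightarrow> int) \<Rightarrow> int \<times> int \<Rightarrow> int \<Rightarrow> bool" where
  "q_pred n m R1 R2 T s i \<longleftrightarrow> triple T s i \<in> Kset n m R1 R2 i - Lset n m"

end

theory Submission
  imports Defs
begin

lemma Lset_char:
  assumes "n \<ge> 2 * m + 1"
  shows "t \<in> Lset n m \<longleftrightarrow> (\<exists>w. t = (int w, 0, 0) \<and> 1 \<le> w \<and> w \<le> m)"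
proof -
  have lt: "\<And>x. x \<le> m \<Longrightarrow> int x mod int n = int x" using assms by simp
  show ?thesis unfolding Lset_def
  proof
    assume "t \<in> {(int w mod int n, 0, 0) | w. w \<in> {1..m}}"
    then show "\<exists>w. t = (int w, 0, 0) \<and> 1 \<le> w \<and> w \<le> m" using lt by auto
  next
    assume "\<exists>w. t = (int w, 0, 0) \<and> 1 \<le> w \<and> w \<le> m"
    then obtain w where "t = (int w, 0, 0)" "1 \<le> w" "w \<le> m" by blast
    then show "t \<in> {(int w mod int n, 0, 0) | w. w \<in> {1..m}}" using lt[of w] by force
  qed
qed

lemma KL_char:
  assumes "domino_set m R1 R2" "n \<ge> 2 * m + 1"
    and "t \<in> Kset n m R1 R2 j - Lset n m"
  shows "\<exists>x y. t = (0, int x, int y) \<and> 1 \<le> x \<and> x \<le> m \<and> 1 \<le> y \<and> y \<le> m"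
proof -
  have sub1: "R1 \<subseteq> {1..m} \<times> {1..m}" and sub2: "R2 \<subseteq> {1..m} \<times> {1..m}"
    using assms(1) unfolding domino_set_def by auto
  have lt: "\<And>x. x \<le> m \<Longrightarrow> int x mod int n = int x" using assms(2) by simp
  have nL: "t \<notin> Lset n m" using assms(3) by blast
  have "t \<in> {(0, int b mod int n, int a mod int n) | a b. (a, b) \<in> R1} \<or>
        t \<in> {(0, int a mod int n, int b mod int n) | a b. (a, b) \<in> R2} \<or>
        t \<in> {(0, int a mod int n, int b mod int n) | a b. (a, b) \<in> R1} \<or>
        t \<in> {(0, int b mod int n, int a mod int n) | a b. (a, b) \<in> R2}"
    using assms(3) unfolding Kset_def
    apply (simp only: Un_iff Diff_iff)
    apply (cases "j mod 4 = 1"; cases "j mod 4 = 2"; cases "j mod 4 = 3")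
    apply (simp_all only: if_P if_not_P simp_thms)
    apply blast+
    done
  then show ?thesis
  proof (elim disjE)
    assume "t \<in> {(0, int b mod int n, int a mod int n) | a b. (a, b) \<in> R1}"
    then obtain a b where "t = (0, int b mod int n, int a mod int n)" "(a, b) \<in> R1" by blast
    then show ?thesis using sub1 lt by force
  next
    assume "t \<in> {(0, int a mod int n, int b mod int n) | a b. (a, b) \<in> R2}"
    then obtain a b where "t = (0, int a mod int n, int b mod int n)" "(a, b) \<in> R2" by blast
    then show ?thesis using sub2 lt by force
  next
    assume "t \<in> {(0, int a mod int n, int b mod int n) | a b. (a, b) \<in> R1}"
    then obtain a b where "t = (0, int a mod int n, int b mod int n)" "(a, b) \<in> R1" by blast
    then show ?thesis using sub1 lt by force
  next
    assume "t \<in> {(0, int b mod int n, int a mod int n) | a b. (a, b) \<in> R2}"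
    then obtain a b where "t = (0, int b mod int n, int a mod int n)" "(a, b) \<in> R2" by blast
    then show ?thesis using sub2 lt by force
  qed
qed

lemma u_mod: "j mod 4 = k mod 4 \<Longrightarrow> u j = u k"
  unfolding u_def by (simp only:)

lemma K_mod: "j mod 4 = k mod 4 \<Longrightarrow> Kset n m R1 R2 j = Kset n m R1 R2 k"
  unfolding Kset_def by (simp only:)

lemma S_mod: "j mod 4 = k mod 4 \<Longrightarrow> Sset n m R1 R2 j = Sset n m R1 R2 k"
proof -
  assume a: "j mod 4 = k mod 4"
  have "Kset n m R1 R2 j = Kset n m R1 R2 k" by (rule K_mod[OF a])
  then show ?thesis unfolding Sset_def by (simp only:)
qed

lemma triple_mod: "j mod 4 = k mod 4 \<Longrightarrow> triple T s j = triple T s k"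
proof -
  assume a: "j mod 4 = k mod 4"
  then have "(j + 1) mod 4 = (k + 1) mod 4" by (metis mod_add_left_eq)
  then show ?thesis unfolding triple_def using u_mod[OF a] u_mod by metis
qed

lemma triple_all:
  assumes "cyclic_triomino_solution n m R1 R2 T"
  shows "triple T s j \<in> Sset n m R1 R2 j"
proof -
  define j' where "j' = (if j mod 4 = 0 then 4 else j mod 4)"
  have j'1: "j' \<in> {1..4}" unfolding j'_def by auto
  have m4: "j' mod 4 = j mod 4" unfolding j'_def by auto
  have m4b: "(j' + 1) mod 4 = (j + 1) mod 4" using m4 by (metis mod_add_left_eq)
  have "triple T s j = triple T s j'" using triple_mod m4 by metis
  moreover have "Sset n m R1 R2 j = Sset n m R1 R2 j'" using S_mod m4 by metis
  moreover have "triple T s j' \<in> Sset n m R1 R2 j'"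
    using assms j'1 unfolding cyclic_triomino_solution_def by blast
  ultimately show ?thesis by simp
qed

lemma q_mod:
  assumes "j mod 4 = k mod 4"
  shows "q_pred n m R1 R2 T s j = q_pred n m R1 R2 T s k"
proof -
  have "triple T s j = triple T s k" using triple_mod assms by metis
  moreover have "Kset n m R1 R2 j = Kset n m R1 R2 k" using K_mod assms by metis
  ultimately show ?thesis unfolding q_pred_def by simp
qed

lemma step:
  assumes dom: "domino_set m R1 R2" and nb: "n \<ge> 2 * m + 1"
    and sol: "cyclic_triomino_solution n m R1 R2 T"
    and q: "q_pred n m R1 R2 T s j"
  shows "q_pred n m R1 R2 T s (j + 1)"
proof -
  have m1: "m \<ge> 1" using dom unfolding domino_set_def by auto
  obtain x y where xy: "triple T s j = (0, int x, int y)" "1 \<le> x" "x \<le> m" "1 \<le> y" "y \<le> m"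
    using KL_char[OF dom nb] q unfolding q_pred_def by blast
  have Ts: "T s = 0" and Ty: "T (addv s (u (j + 1))) = int y"
    using xy(1) unfolding triple_def by auto
  have "triple T s (j+1) \<in> Sset n m R1 R2 (j+1)" by (rule triple_all[OF sol])
  then obtain a b c k where t: "triple T s (j+1) = ((a + k) mod int n, (b + k) mod int n, (c + k) mod int n)"
    and abc: "(a, b, c) \<in> Kset n m R1 R2 (j+1)" and k: "0 \<le> k" "k < int n"
    unfolding Sset_def by auto
  have t1: "(a + k) mod int n = 0" and t2: "(b + k) mod int n = int y"
    using t Ts Ty unfolding triple_def by auto
  show ?thesis
  proof (cases "(a, b, c) \<in> Lset n m")
    case True
    then obtain w where w: "a = int w" "b = 0" "c = 0" "1 \<le> w" "w \<le> m"
      using Lset_char[OF nb] by auto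
    have "k = int y" using t2 w k by simp
    then have "(a + k) mod int n = int w + int y" using w xy nb by simp
    then show ?thesis using t1 w by simp
  next
    case False
    then obtain x' y' where e: "(a, b, c) = (0, int x', int y')" "1 \<le> x'" "x' \<le> m" "1 \<le> y'" "y' \<le> m"
      using KL_char[OF dom nb] abc by blast
    have "k = 0" using t1 e k by simp
    then have "triple T s (j+1) = (a, b, c)" using t e nb by simp
    then show ?thesis using abc False unfolding q_pred_def by simp
  qed
qed

theorem lemma3p3:
  fixes n m :: nat and R1 R2 :: "(nat \<times> nat) set" and T :: "int \<times> int \<Rightarrow> int"
    and s :: "int \<times> int" and i :: int
  assumes "domino_set m R1 R2"
    and "n \<ge> 2 * m + 1"
    and "cyclic_triomino_solution n m R1 R2 T"
    and "i \<in> {1..4}"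
    and "q_pred n m R1 R2 T s i"
  shows "\<forall>j \<in> {1..4}. q_pred n m R1 R2 T s j"
proof
  fix j :: int assume "j \<in> {1..4}"
  have all: "q_pred n m R1 R2 T s (i + int d)" for d :: nat
  proof (induction d)
    case 0 then show ?case using assms(5) by simp
  next
    case (Suc d)
    have "q_pred n m R1 R2 T s (i + int d + 1)" by (rule step[OF assms(1-3) Suc.IH])
    then show ?case by (simp add: algebra_simps)
  qed
  have e: "(i + int (nat ((j - i) mod 4))) mod 4 = j mod 4"
  proof -
    have "int (nat ((j - i) mod 4)) = (j - i) mod 4" by simp
    then have "(i + int (nat ((j - i) mod 4))) mod 4 = (i + (j - i) mod 4) mod 4" by simp
    also have "\<dots> = (i + (j - i)) mod 4" by (rule mod_add_right_eq)
    finally show ?thesis by simp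
  qed
  show "q_pred n m R1 R2 T s j" using all[of "nat ((j - i) mod 4)"] q_mod[OF e] by simp
qed

end
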